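(* Let $d\ge 1$ and let $X$ be a minimal $\mathbb{Z}^d$-subshift of finite type. Then $\overline{D}_h(X)\le d-1$.
   Context: A subshift of $\mathcal A^{\mathbb Z^d}$ ($\mathcal A$ finite) is a closed shift-invariant set; it is of finite type if it is the set of configurations avoiding a finite set of forbidden patterns. $X$ is minimal if every pattern appearing in some configuration of $X$ appears in every configuration of $X$. $N_n(X)$ is the number of patterns on support $\llbracket 1,n\rrbracket^d$ appearing in $X$, and the upper entropy dimension is $\overline D_h(X)=\limsup_n \frac{\log_2\log_2 N_n(X)}{\log_2 n}$. *)

theory Defs
  imports Complex_Main "HOL-Library.Extended_Real" "HOL-Library.Liminf_Limsup"
begin

text \<open>Z^d is modelled as the function type 'd \<Rightarrow> int for a finite index type 'd,
  so d = CARD('d) \<ge> 1. The finite alphabet is a type 'a of class finite.\<close>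

type_synonym ('d, 'a) config = "('d \<Rightarrow> int) \<Rightarrow> 'a"
type_synonym ('d, 'a) pattern = "('d \<Rightarrow> int) \<rightharpoonup> 'a"

definition is_pattern :: "('d, 'a) pattern \<Rightarrow> bool" where
  "is_pattern P \<longleftrightarrow> finite (dom P)"

definition occurs_in :: "('d, 'a) pattern \<Rightarrow> ('d, 'a) config \<Rightarrow> bool" where
  "occurs_in P x \<longleftrightarrow> (\<exists>v. \<forall>p\<in>dom P. P p = Some (x (\<lambda>i. p i + v i)))"

definition appears_in :: "('d, 'a) pattern \<Rightarrow> ('d, 'a) config set \<Rightarrow> bool" where
  "appears_in P X \<longleftrightarrow> (\<exists>x\<in>X. occurs_in P x)"

definition is_SFT :: "('d, 'a) config set \<Rightarrow> bool" where
  "is_SFT X \<longleftrightarrow> (\<exists>F. finite F \<and> (\<forall>P\<in>F. is_pattern P) \<and>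
      X = {x. \<forall>P\<in>F. \<not> occurs_in P x})"

definition minimal_subshift :: "('d, 'a) config set \<Rightarrow> bool" where
  "minimal_subshift X \<longleftrightarrow>
     (\<forall>P. is_pattern P \<longrightarrow> appears_in P X \<longrightarrow> (\<forall>x\<in>X. occurs_in P x))"

definition cube :: "nat \<Rightarrow> ('d \<Rightarrow> int) set" where
  "cube n = {p. \<forall>i. 1 \<le> p i \<and> p i \<le> int n}"

definition N_count :: "('d, 'a) config set \<Rightarrow> nat \<Rightarrow> nat" where
  "N_count X n = card {P. dom P = cube n \<and> appears_in P X}"

definition ent_dim_term :: "('d, 'a) config set \<Rightarrow> nat \<Rightarrow> ereal" where
  "ent_dim_term X n = (if N_count X n \<le> 1 then -\<infinity>
      else ereal (log 2 (log 2 (real (N_count X n))) / log 2 (real n)))"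

definition upper_entropy_dim :: "('d, 'a) config set \<Rightarrow> ereal" where
  "upper_entropy_dim X = limsup (ent_dim_term X)"

end

theory Submission
  imports Defs "HOL-Library.List_Lexorder" "HOL-Library.FuncSet" "HOL-Library.Diagonal_Subsequence"
begin

lemma finite_box:
  fixes q :: "'d::finite \<Rightarrow> int"
  shows "finite {p. \<forall>i. \<bar>p i - q i\<bar> \<le> K}"
proof -
  have "{p. \<forall>i. \<bar>p i - q i\<bar> \<le> K} \<subseteq> PiE UNIV (\<lambda>i. {q i - K..q i + K})"
    by (auto simp: abs_le_iff) (metis add.commute diff_le_eq le_diff_eq)+
  moreover have "finite (PiE (UNIV::'d set) (\<lambda>i. {q i - K..q i + K}))"
    by (rule finite_PiE) auto
  ultimately show ?thesis by (rule finite_subset)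
qed

lemma finite_bound:
  fixes S :: "('d::finite \<Rightarrow> int) set"
  assumes "finite S"
  shows "\<exists>N::nat. \<forall>p\<in>S. \<forall>i. \<bar>p i\<bar> \<le> int N"
proof -
  let ?V = "insert 0 ((\<lambda>(p,i). \<bar>p i\<bar>) ` (S \<times> UNIV))"
  have f: "finite ?V" using assms by auto
  show ?thesis
  proof (intro exI ballI allI)
    fix p i assume "p \<in> S"
    then have "\<bar>p i\<bar> \<in> ?V" by force
    then have "\<bar>p i\<bar> \<le> Max ?V" using f by simp
    also have "\<dots> \<le> int (nat (Max ?V))" by simp
    finally show "\<bar>p i\<bar> \<le> int (nat (Max ?V))" .
  qed
qed

lemma map_plus_less:
  "(map (\<lambda>i. p i + (v i::int)) es < map (\<lambda>i. q i + v i) es) \<longleftrightarrow> (map p es < map q es)"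
  by (induction es) auto

locale sft =
  fixes F :: "('d::finite, 'a::finite) pattern set" and M :: int and X :: "('d,'a) config set"
  assumes finF: "finite F"
    and bnd: "\<And>P p i. P \<in> F \<Longrightarrow> p \<in> dom P \<Longrightarrow> \<bar>p i\<bar> \<le> M"
    and M0: "M \<ge> 0"
    and X_def: "X = {x. \<forall>P\<in>F. \<not> occurs_in P x}"
begin

lemma local_crit:
  assumes "\<And>u. \<exists>w\<in>X. \<forall>p. (\<forall>i. \<bar>p i - u i\<bar> \<le> M) \<longrightarrow> z p = w p"
  shows "z \<in> X"
proof -
  { fix P assume P: "P \<in> F" and occ: "occurs_in P z"
    then obtain v where v: "\<forall>p\<in>dom P. P p = Some (z (\<lambda>i. p i + v i))"
      by (auto simp: occurs_in_def)
    obtain w where w: "w \<in> X" "\<forall>p. (\<forall>i. \<bar>p i - v i\<bar> \<le> M) \<longrightarrow> z p = w p"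
      using assms by blast
    have "\<forall>p\<in>dom P. P p = Some (w (\<lambda>i. p i + v i))"
    proof
      fix p assume p: "p \<in> dom P"
      have "\<forall>i. \<bar>(\<lambda>i. p i + v i) i - v i\<bar> \<le> M" using bnd[OF P p] by simp
      then show "P p = Some (w (\<lambda>i. p i + v i))" using v p w(2) by metis
    qed
    then have "occurs_in P w" by (auto simp: occurs_in_def)
    with w(1) P have False by (auto simp: X_def) }
  then show ?thesis by (auto simp: X_def)
qed

lemma shift_in:
  assumes "y \<in> X" shows "(\<lambda>p. y (\<lambda>i. p i + v i)) \<in> X"
proof -
  { fix P assume P: "P \<in> F" and occ: "occurs_in P (\<lambda>p. y (\<lambda>i. p i + v i))"
    then obtain u where u: "\<forall>p\<in>dom P. P p = Some (y (\<lambda>i. p i + u i + v i))"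
      by (auto simp: occurs_in_def)
    then have "\<forall>p\<in>dom P. P p = Some (y (\<lambda>i. p i + (u i + v i)))"
      by (simp add: add.assoc)
    then have "occurs_in P y" unfolding occurs_in_def
      by (intro exI[of _ "\<lambda>i. u i + v i"]) simp
    with assms P have False by (auto simp: X_def) }
  then show ?thesis by (auto simp: X_def)
qed

end


definition ltc :: "('d \<Rightarrow> int) set \<Rightarrow> 'd list \<Rightarrow> (('d \<Rightarrow> int) \<Rightarrow> 'a::countable) \<Rightarrow> (('d \<Rightarrow> int) \<Rightarrow> 'a) \<Rightarrow> bool" where
  "ltc R es a b \<longleftrightarrow> (\<exists>q\<in>R. to_nat (a q) < to_nat (b q) \<and> (\<forall>p\<in>R. map p es < map q es \<longrightarrow> a p = b p))"

lemma key_inj: "set es = UNIV \<Longrightarrow> map p es = map q es \<Longrightarrow> p = q"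
  by (auto simp: map_eq_conv)

lemma ltc_trans:
  assumes es: "set es = UNIV" and ab: "ltc R es a b" and bc: "ltc R es b c"
  shows "ltc R es a c"
proof -
  obtain q1 where q1: "q1 \<in> R" "to_nat (a q1) < to_nat (b q1)" "\<forall>p\<in>R. map p es < map q1 es \<longrightarrow> a p = b p"
    using ab by (auto simp: ltc_def)
  obtain q2 where q2: "q2 \<in> R" "to_nat (b q2) < to_nat (c q2)" "\<forall>p\<in>R. map p es < map q2 es \<longrightarrow> b p = c p"
    using bc by (auto simp: ltc_def)
  consider "map q1 es < map q2 es" | "map q1 es = map q2 es" | "map q2 es < map q1 es"
    using less_linear by blast
  then show ?thesis
  proof cases
    case 1
    show ?thesis unfolding ltc_def
      using q1 q2 1 by (intro bexI[OF _ q1(1)]) (auto dest: order.strict_trans)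
  next
    case 2
    then have e: "q1 = q2" using key_inj[OF es] by blast
    show ?thesis unfolding ltc_def
      using q1 q2 e by (intro bexI[OF _ q1(1)]) auto
  next
    case 3
    show ?thesis unfolding ltc_def
      using q1 q2 3 by (intro bexI[OF _ q2(1)]) (auto dest: order.strict_trans)
  qed
qed

lemma ltc_irrefl: "\<not> ltc R es a a"
  by (auto simp: ltc_def)

lemma exists_ltc_min:
  fixes S :: "(('d \<Rightarrow> int) \<Rightarrow> 'a::finite) set"
  assumes es: "set es = UNIV" and fin: "finite R" and ne: "x \<in> S"
  shows "\<exists>y\<in>S. \<forall>y'\<in>S. \<not> ltc R es (restrict y' R) (restrict y R)"
proof -
  let ?T = "(\<lambda>y. restrict y R) ` S"
  let ?r = "{(a,b). a \<in> ?T \<and> b \<in> ?T \<and> ltc R es a b}"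
  have "?T \<subseteq> PiE R (\<lambda>_. UNIV)" by auto
  moreover have "finite (PiE R (\<lambda>_. UNIV::'a set))" using fin by (intro finite_PiE) auto
  ultimately have fT: "finite ?T" by (rule finite_subset)
  have fr: "finite ?r" by (rule finite_subset[of _ "?T \<times> ?T"]) (use fT in auto)
  have tr: "trans ?r" by (auto intro!: transI intro: ltc_trans[OF es])
  have "acyclic ?r"
    unfolding acyclic_def trancl_id[OF tr] using ltc_irrefl by blast
  then have wf: "wf ?r" by (rule finite_acyclic_wf[OF fr])
  obtain a where a: "a \<in> ?T" "\<And>b. (b, a) \<in> ?r \<Longrightarrow> b \<notin> ?T"
    using wfE_min[OF wf, of "restrict x R" ?T] ne by blast
  then obtain y where y: "y \<in> S" "a = restrict y R" by blast
  show ?thesis using a y by (intro bexI[OF _ y(1)]) auto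
qed


locale msft = sft F M X for F :: "('d::finite, 'a::finite) pattern set" and M X +
  assumes minX: "minimal_subshift X"
begin

lemma replace_in:
  fixes x z y :: "('d,'a) config" and D B :: "('d \<Rightarrow> int) set"
  assumes z: "z \<in> X" and D: "D = {p. x p \<noteq> z p}"
    and B: "B = {p. \<exists>q\<in>D. \<forall>i. \<bar>p i - q i\<bar> \<le> 2*M}"
    and y: "y \<in> X" and occ: "\<forall>p\<in>B. y (\<lambda>i. p i + v i) = x p"
  shows "(\<lambda>p. if (\<lambda>i. p i - v i) \<in> D then z (\<lambda>i. p i - v i) else y p) \<in> X"
    (is "?y' \<in> X")
proof (rule local_crit)
  fix u
  show "\<exists>w\<in>X. \<forall>p. (\<forall>i. \<bar>p i - u i\<bar> \<le> M) \<longrightarrow> ?y' p = w p"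
  proof (cases "\<exists>r. (\<forall>i. \<bar>r i - u i\<bar> \<le> M) \<and> (\<lambda>i. r i - v i) \<in> D")
    case True
    then obtain r where r: "\<forall>i. \<bar>r i - u i\<bar> \<le> M" "(\<lambda>i. r i - v i) \<in> D" by blast
    have zs: "(\<lambda>p. z (\<lambda>i. p i + (- v) i)) \<in> X" by (rule shift_in[OF z])
    show ?thesis
    proof (intro bexI[OF _ zs] allI impI)
      fix p assume p: "\<forall>i. \<bar>p i - u i\<bar> \<le> M"
      have "(\<lambda>i. p i - v i) \<in> B"
        unfolding B
      proof (intro CollectI bexI[OF _ r(2)] allI)
        fix i show "\<bar>p i - v i - (r i - v i)\<bar> \<le> 2 * M"
          using p[rule_format, of i] r(1)[rule_format, of i] by (smt (verit))
      qed
      from bspec[OF occ this] have yx: "y p = x (\<lambda>i. p i - v i)" by simp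
      show "?y' p = z (\<lambda>i. p i + (- v) i)"
        using yx D by auto
    qed
  next
    case False
    show ?thesis
      by (intro bexI[OF _ y]) (use False in auto)
  qed
qed

end

context msft begin

lemma no_occ_box:
  fixes x z :: "('d,'a) config" and D B :: "('d \<Rightarrow> int) set" and n :: nat
  assumes x: "x \<in> X" and z: "z \<in> X" and D: "D = {p. x p \<noteq> z p}"
    and B: "B = {p. \<exists>q\<in>D. \<forall>i. \<bar>p i - q i\<bar> \<le> 2*M}"
    and es: "set es = UNIV" and d0: "d0 \<in> D"
    and d0min: "\<forall>q\<in>D. q \<noteq> d0 \<longrightarrow> map d0 es < map q es"
    and ord: "to_nat (z d0) < to_nat (x d0)"
  shows "\<exists>y\<in>X. \<forall>v. (\<forall>p\<in>B. \<forall>i. \<bar>p i + v i\<bar> \<le> int n) \<longrightarrow> \<not> (\<forall>p\<in>B. y (\<lambda>i. p i + v i) = x p)"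
proof -
  define R where "R = {p::'d\<Rightarrow>int. \<forall>i. \<bar>p i\<bar> \<le> int n}"
  have finR: "finite R" unfolding R_def using finite_box[of "\<lambda>_. 0" "int n"] by simp
  have R: "\<And>p. p \<in> R \<longleftrightarrow> (\<forall>i. \<bar>p i\<bar> \<le> int n)" by (simp add: R_def)
  obtain y where y: "y \<in> X" and ymin: "\<And>y'. y' \<in> X \<Longrightarrow> \<not> ltc R es (restrict y' R) (restrict y R)"
    using exists_ltc_min[OF es finR x] by blast
  show ?thesis
  proof (intro bexI[OF _ y] allI impI notI)
    fix v assume box: "\<forall>p\<in>B. \<forall>i. \<bar>p i + v i\<bar> \<le> int n"
      and occ: "\<forall>p\<in>B. y (\<lambda>i. p i + v i) = x p"
    define y' where "y' = (\<lambda>p. if (\<lambda>i. p i - v i) \<in> D then z (\<lambda>i. p i - v i) else y p)"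
    have y'X: "y' \<in> X" unfolding y'_def by (rule replace_in[OF z D B y occ])
    define q where "q = (\<lambda>i. d0 i + v i)"
    have d0B: "d0 \<in> B" using d0 M0 unfolding B by force
    have qR: "q \<in> R" using box d0B unfolding R q_def by blast
    have qs: "(\<lambda>i. q i - v i) = d0" by (simp add: q_def)
    have yq: "y q = x d0" using occ d0B unfolding q_def by blast
    have y'q: "y' q = z d0" using d0 qs unfolding y'_def by simp
    have "ltc R es (restrict y' R) (restrict y R)"
      unfolding ltc_def
    proof (intro bexI[OF _ qR] conjI ballI impI)
      show "to_nat (restrict y' R q) < to_nat (restrict y R q)"
        using qR yq y'q ord by simp
    next
      fix p assume pR: "p \<in> R" and lt: "map p es < map q es"
      have "(\<lambda>i. p i - v i) \<notin> D"
      proof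
        assume s: "(\<lambda>i. p i - v i) \<in> D"
        have "map (\<lambda>i. (p i - v i) + v i) es < map (\<lambda>i. d0 i + v i) es"
          using lt by (simp add: q_def)
        then have "map (\<lambda>i. p i - v i) es < map d0 es"
          by (subst (asm) map_plus_less)
        moreover have "(\<lambda>i. p i - v i) \<noteq> d0 \<longrightarrow> map d0 es < map (\<lambda>i. p i - v i) es"
          using d0min s by blast
        ultimately show False
          by (metis less_asym less_irrefl)
      qed
      then show "restrict y' R p = restrict y R p" using pR unfolding y'_def by simp
    qed
    then show False using ymin[OF y'X] by blast
  qed
qed

end

lemma diag_limit:
  fixes ys :: "nat \<Rightarrow> ('d::finite \<Rightarrow> int) \<Rightarrow> 'a::finite"
  shows "\<exists>r l. strict_mono r \<and> (\<forall>T. finite T \<longrightarrow> (\<forall>\<^sub>F m in sequentially. \<forall>p\<in>T. ys (r m) p = l p))"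
proof -
  let ?P = "\<lambda>k (s::nat\<Rightarrow>nat). \<exists>a. \<forall>j. ys (s j) (from_nat k) = a"
  interpret S: subseqs ?P
  proof
    fix k and s :: "nat \<Rightarrow> nat" assume s: "strict_mono s"
    have "\<exists>a. infinite {j. ys (s j) (from_nat k) = a}"
    proof (rule ccontr)
      assume "\<not> ?thesis"
      then have "finite (\<Union>a\<in>(UNIV::'a set). {j. ys (s j) (from_nat k) = a})" by auto
      moreover have "(\<Union>a\<in>(UNIV::'a set). {j. ys (s j) (from_nat k) = a}) = UNIV" by auto
      ultimately show False by simp
    qed
    then obtain a where "infinite {j. ys (s j) (from_nat k) = a}" by blast
    from infinite_enumerate[OF this] obtain r' :: "nat \<Rightarrow> nat" where "strict_mono r'" "\<forall>n. r' n \<in> {j. ys (s j) (from_nat k) = a}"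
      by blast
    then show "\<exists>r'. strict_mono r' \<and> ?P k (s \<circ> r')" by auto
  qed
  define l where "l p = ys (S.diagseq (Suc (to_nat p))) p" for p
  have conv: "ys (S.diagseq m) p = l p" if "m \<ge> Suc (to_nat p)" for m p
  proof -
    obtain a where a: "\<forall>j. ys ((S.diagseq \<circ> (+) (Suc (to_nat p))) j) (from_nat (to_nat p)) = a"
      using S.diagseq_holds[of "to_nat p"] by fastforce
    have "ys (S.diagseq m) p = a" using a[rule_format, of "m - Suc (to_nat p)"] that by simp
    moreover have "l p = a" using a[rule_format, of 0] unfolding l_def by simp
    ultimately show ?thesis by simp
  qed
  show ?thesis
  proof (intro exI conjI allI impI)
    show "strict_mono S.diagseq" by (rule S.subseq_diagseq)
    fix T :: "('d \<Rightarrow> int) set" assume T: "finite T"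
    show "\<forall>\<^sub>F m in sequentially. \<forall>p\<in>T. ys (S.diagseq m) p = l p"
      using T by (intro eventually_ball_finite ballI) (auto intro: conv eventually_sequentiallyI)
  qed
qed


context msft begin

lemma finite_dom_F: "P \<in> F \<Longrightarrow> finite (dom P)"
proof -
  assume P: "P \<in> F"
  have "dom P \<subseteq> {p. \<forall>i. \<bar>p i - (\<lambda>_. 0) i\<bar> \<le> M}" using bnd[OF P] by auto
  then show ?thesis using finite_box[of "\<lambda>_. 0" M] by (rule finite_subset)
qed

lemma asym_False:
  fixes x z :: "('d,'a) config" and D B :: "('d \<Rightarrow> int) set"
  assumes x: "x \<in> X" and z: "z \<in> X" and D: "D = {p. x p \<noteq> z p}" and finD: "finite D"
    and es: "set es = UNIV" and d0: "d0 \<in> D"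
    and d0min: "\<forall>q\<in>D. q \<noteq> d0 \<longrightarrow> map d0 es < map q es"
    and ord: "to_nat (z d0) < to_nat (x d0)"
  shows False
proof -
  define B where "B = {p. \<exists>q\<in>D. \<forall>i. \<bar>p i - q i\<bar> \<le> 2*M}"
  have finB: "finite B"
  proof -
    have "B = (\<Union>q\<in>D. {p. \<forall>i. \<bar>p i - q i\<bar> \<le> 2*M})" unfolding B_def by auto
    then show ?thesis using finD finite_box by auto
  qed
  have "\<forall>n. \<exists>y\<in>X. \<forall>v. (\<forall>p\<in>B. \<forall>i. \<bar>p i + v i\<bar> \<le> int n) \<longrightarrow> \<not> (\<forall>p\<in>B. y (\<lambda>i. p i + v i) = x p)"
    using no_occ_box[OF x z D B_def es d0 d0min ord] by blast
  then obtain ys where ys: "\<And>n. ys n \<in> X"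
    "\<And>n v. (\<forall>p\<in>B. \<forall>i. \<bar>p i + v i\<bar> \<le> int n) \<Longrightarrow> \<not> (\<forall>p\<in>B. ys n (\<lambda>i. p i + v i) = x p)"
    by metis
  obtain r l where r: "strict_mono r"
    and conv: "\<And>T. finite T \<Longrightarrow> (\<forall>\<^sub>F m in sequentially. \<forall>p\<in>T. ys (r m) p = l p)"
    using diag_limit[of ys] by blast
  have lX: "l \<in> X"
  proof -
    { fix P assume P: "P \<in> F" and occ: "occurs_in P l"
      then obtain v where v: "\<forall>p\<in>dom P. P p = Some (l (\<lambda>i. p i + v i))"
        by (auto simp: occurs_in_def)
      have "finite ((\<lambda>p. (\<lambda>i. p i + v i)) ` dom P)" using finite_dom_F[OF P] by simp
      from eventually_happens'[OF _ conv[OF this]] obtain m where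
        m: "\<forall>q\<in>(\<lambda>p. (\<lambda>i. p i + v i)) ` dom P. ys (r m) q = l q" by auto
      have "\<forall>p\<in>dom P. P p = Some (ys (r m) (\<lambda>i. p i + v i))" using v m by auto
      then have "occurs_in P (ys (r m))" unfolding occurs_in_def by blast
      with ys(1)[of "r m"] P have False by (auto simp: X_def) }
    then show ?thesis by (auto simp: X_def)
  qed
  define Q :: "('d,'a) pattern" where "Q = (\<lambda>p. if p \<in> B then Some (x p) else None)"
  have domQ: "dom Q = B" by (auto simp: Q_def dom_def)
  have "appears_in Q X" unfolding appears_in_def occurs_in_def
    by (intro bexI[OF _ x] exI[of _ "\<lambda>_. 0"]) (auto simp: Q_def domQ split: if_splits)
  moreover have "is_pattern Q" using finB domQ by (simp add: is_pattern_def)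
  ultimately have "occurs_in Q l" using minX lX by (auto simp: minimal_subshift_def)
  then obtain v where v: "\<forall>p\<in>B. Q p = Some (l (\<lambda>i. p i + v i))"
    unfolding occurs_in_def domQ by blast
  then have lv: "\<forall>p\<in>B. l (\<lambda>i. p i + v i) = x p" by (auto simp: Q_def)
  let ?S = "(\<lambda>p. (\<lambda>i. p i + v i)) ` B"
  have finS: "finite ?S" using finB by simp
  obtain N where N: "\<forall>q\<in>?S. \<forall>i. \<bar>q i\<bar> \<le> int N" using finite_bound[OF finS] by blast
  have "\<forall>\<^sub>F m in sequentially. (\<forall>q\<in>?S. ys (r m) q = l q) \<and> m \<ge> N"
    using conv[OF finS] eventually_ge_at_top by (rule eventually_conj)
  then obtain N0 where "\<forall>m\<ge>N0. (\<forall>q\<in>?S. ys (r m) q = l q) \<and> m \<ge> N"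
    unfolding eventually_sequentially by blast
  then obtain m where m: "\<forall>q\<in>?S. ys (r m) q = l q" "m \<ge> N" by blast
  have rm: "r m \<ge> N" using seq_suble[OF r, of m] m(2) by simp
  have box: "\<forall>p\<in>B. \<forall>i. \<bar>p i + v i\<bar> \<le> int (r m)"
  proof (intro ballI allI)
    fix p i assume "p \<in> B"
    then have "\<bar>p i + v i\<bar> \<le> int N" using N by auto
    then show "\<bar>p i + v i\<bar> \<le> int (r m)" using rm by simp
  qed
  have "\<forall>p\<in>B. ys (r m) (\<lambda>i. p i + v i) = x p" using m(1) lv by auto
  then show False using ys(2)[OF box] by blast
qed

lemma asym_eq:
  fixes x z :: "('d,'a) config"
  assumes x: "x \<in> X" and z: "z \<in> X" and fin: "finite {p. x p \<noteq> z p}"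
  shows "x = z"
proof (rule ccontr)
  assume ne: "x \<noteq> z"
  define D where "D = {p. x p \<noteq> z p}"
  have D': "D = {p. z p \<noteq> x p}" unfolding D_def by auto
  obtain es :: "'d list" where es: "set es = UNIV" using finite_list[of "UNIV::'d set"] by auto
  have Dne: "D \<noteq> {}" using ne unfolding D_def by auto
  have finD: "finite D" using fin D_def by simp
  have "finite ((\<lambda>p. map p es) ` D)" "(\<lambda>p. map p es) ` D \<noteq> {}" using finD Dne by auto
  then have "Min ((\<lambda>p. map p es) ` D) \<in> (\<lambda>p. map p es) ` D" by (rule Min_in)
  then obtain d0 where d0: "d0 \<in> D" "map d0 es = Min ((\<lambda>p. map p es) ` D)" by auto
  have d0min: "\<forall>q\<in>D. q \<noteq> d0 \<longrightarrow> map d0 es < map q es"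
  proof (intro ballI impI)
    fix q assume q: "q \<in> D" "q \<noteq> d0"
    have "map q es \<in> (\<lambda>p. map p es) ` D" using q(1) by blast
    then have "Min ((\<lambda>p. map p es) ` D) \<le> map q es" using finD by (intro Min_le) auto
    then have "map d0 es \<le> map q es" using d0(2) by simp
    moreover have "map d0 es \<noteq> map q es" using key_inj[OF es] q(2) by metis
    ultimately show "map d0 es < map q es" by (rule le_neq_trans)
  qed
  have "x d0 \<noteq> z d0" using d0 unfolding D_def by simp
  then have "to_nat (x d0) \<noteq> to_nat (z d0)" by simp
  then consider "to_nat (z d0) < to_nat (x d0)" | "to_nat (x d0) < to_nat (z d0)" by linarith
  then show False
  proof cases
    case 1 show False by (rule asym_False[OF x z D_def finD es d0(1) d0min 1])
  next
    case 2 show False by (rule asym_False[OF z x D' finD es d0(1) d0min 2])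
  qed
qed

end

lemma cube_eq: "cube n = {p::'d\<Rightarrow>int. \<forall>i. 1 \<le> p i \<and> p i \<le> int n}" by (simp add: cube_def)

lemma finite_cube: "finite (cube n :: ('d::finite \<Rightarrow> int) set)"
proof -
  have "cube n \<subseteq> {p::'d\<Rightarrow>int. \<forall>i. \<bar>p i - (\<lambda>_. 0) i\<bar> \<le> int n}"
  proof
    fix p :: "'d \<Rightarrow> int" assume "p \<in> cube n"
    then have h: "\<And>i. 1 \<le> p i \<and> p i \<le> int n" by (simp add: cube_def)
    show "p \<in> {p::'d\<Rightarrow>int. \<forall>i. \<bar>p i - (\<lambda>_. 0) i\<bar> \<le> int n}"
    proof (simp, intro allI)
      fix i show "\<bar>p i\<bar> \<le> int n" using h[of i] by simp
    qed
  qed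
  then show ?thesis using finite_box by (rule finite_subset)
qed

context msft begin

lemma cube_det:
  fixes y y' :: "('d,'a) config"
  assumes y: "y \<in> X" and y': "y' \<in> X"
    and agree: "\<forall>p\<in>cube n. (\<exists>i. p i \<le> 2*M \<or> int n - 2*M < p i) \<longrightarrow> y p = y' p"
  shows "\<forall>p\<in>cube n. y p = y' p"
proof -
  define z where "z = (\<lambda>p. if p \<in> cube n then y' p else y p)"
  have zX: "z \<in> X"
  proof (rule local_crit)
    fix u
    show "\<exists>w\<in>X. \<forall>p. (\<forall>i. \<bar>p i - u i\<bar> \<le> M) \<longrightarrow> z p = w p"
    proof (cases "\<exists>r. (\<forall>i. \<bar>r i - u i\<bar> \<le> M) \<and> r \<notin> cube n")
      case True
      then obtain r where r: "\<forall>i. \<bar>r i - u i\<bar> \<le> M" "r \<notin> cube n" by blast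
      then obtain i where i: "r i < 1 \<or> int n < r i" by (auto simp: cube_def not_le)
      show ?thesis
      proof (intro bexI[OF _ y] allI impI)
        fix p assume p: "\<forall>i. \<bar>p i - u i\<bar> \<le> M"
        show "z p = y p"
        proof (cases "p \<in> cube n")
          case True
          have "p i \<le> 2*M \<or> int n - 2*M < p i"
            using p[rule_format, of i] r(1)[rule_format, of i] i True
            by (smt (verit))
          then show ?thesis using agree True by (auto simp: z_def)
        qed (simp add: z_def)
      qed
    next
      case False
      then show ?thesis by (intro bexI[OF _ y']) (auto simp: z_def)
    qed
  qed
  have "{p. z p \<noteq> y p} \<subseteq> cube n" by (auto simp: z_def)
  then have "finite {p. z p \<noteq> y p}" using finite_cube by (rule finite_subset)
  then have "z = y" by (rule asym_eq[OF zX y])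
  show ?thesis
  proof
    fix p :: "'d \<Rightarrow> int" assume p: "p \<in> cube n"
    have "z p = y p" using \<open>z = y\<close> by simp
    then show "y p = y' p" using p by (simp add: z_def)
  qed
qed

lemma count_bound:
  "N_count X n \<le> card (UNIV :: 'a set) ^ card {p\<in>(cube n :: ('d \<Rightarrow> int) set). \<exists>i. p i \<le> 2*M \<or> int n - 2*M < p i}"
proof -
  define Bd :: "('d \<Rightarrow> int) set" where "Bd = {p\<in>cube n. \<exists>i. p i \<le> 2*M \<or> int n - 2*M < p i}"
  define Pats where "Pats = {P. dom P = cube n \<and> appears_in P X}"
  define g where "g P = restrict (\<lambda>p. the (P p)) Bd" for P :: "('d,'a) pattern"
  have finBd: "finite Bd" unfolding Bd_def by (rule finite_subset[OF _ finite_cube]) auto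
  have rep: "\<exists>w\<in>X. \<forall>p\<in>cube n. P p = Some (w p)" if "P \<in> Pats" for P
  proof -
    from that have d: "dom P = cube n" and "\<exists>y\<in>X. \<exists>v. \<forall>p\<in>dom P. P p = Some (y (\<lambda>i. p i + v i))"
      unfolding Pats_def appears_in_def occurs_in_def by blast+
    then obtain y v where y: "y \<in> X" "\<forall>p\<in>dom P. P p = Some (y (\<lambda>i. p i + v i))" "dom P = cube n"
      by blast
    show ?thesis using y by (intro bexI[OF _ shift_in[OF y(1), of v]]) auto
  qed
  have inj: "inj_on g Pats"
  proof (rule inj_onI)
    fix P1 P2 assume P1: "P1 \<in> Pats" and P2: "P2 \<in> Pats" and eq: "g P1 = g P2"
    obtain w1 where w1: "w1 \<in> X" "\<forall>p\<in>cube n. P1 p = Some (w1 p)" using rep[OF P1] by blast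
    obtain w2 where w2: "w2 \<in> X" "\<forall>p\<in>cube n. P2 p = Some (w2 p)" using rep[OF P2] by blast
    have "\<forall>p\<in>cube n. (\<exists>i. p i \<le> 2*M \<or> int n - 2*M < p i) \<longrightarrow> w1 p = w2 p"
    proof (intro ballI impI)
      fix p :: "'d \<Rightarrow> int" assume p: "p \<in> cube n" "\<exists>i. p i \<le> 2*M \<or> int n - 2*M < p i"
      then have "p \<in> Bd" by (simp add: Bd_def)
      then have "g P1 p = the (P1 p)" "g P2 p = the (P2 p)" by (simp_all add: g_def)
      then show "w1 p = w2 p" using eq w1(2) w2(2) p(1) by simp
    qed
    then have c: "\<forall>p\<in>cube n. w1 p = w2 p" by (rule cube_det[OF w1(1) w2(1)])
    show "P1 = P2"
    proof
      fix p show "P1 p = P2 p"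
      proof (cases "p \<in> cube n")
        case True then show ?thesis using c w1(2) w2(2) by simp
      next
        case False
        then have "p \<notin> dom P1" "p \<notin> dom P2" using P1 P2 by (auto simp: Pats_def)
        then show ?thesis by (simp add: domIff)
      qed
    qed
  qed
  have "g ` Pats \<subseteq> PiE Bd (\<lambda>_. UNIV)" by (auto simp: g_def)
  moreover have "finite (PiE Bd (\<lambda>_. UNIV :: 'a set))" using finBd by (intro finite_PiE) auto
  ultimately have "card Pats \<le> card (PiE Bd (\<lambda>_. UNIV :: 'a set))"
    using card_inj_on_le[OF inj] by blast
  also have "\<dots> = card (UNIV :: 'a set) ^ card Bd" using finBd by (simp add: card_PiE)
  finally show ?thesis unfolding N_count_def Pats_def Bd_def .
qed

end

lemma lim_aux: "(\<lambda>n::nat. C / log 2 (real n) + D) \<longlonglongrightarrow> (D::real)"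
proof -
  have "filterlim (\<lambda>n::nat. ln (real n)) at_top sequentially"
    by (rule filterlim_compose[OF ln_at_top filterlim_real_sequentially])
  then have "filterlim (\<lambda>n::nat. ln (real n)) at_infinity sequentially"
    by (rule filterlim_at_top_imp_at_infinity)
  then have "(\<lambda>n::nat. (C * ln 2) / ln (real n)) \<longlonglongrightarrow> 0"
    by (rule tendsto_divide_0[OF tendsto_const])
  moreover have "(\<lambda>n::nat. (C * ln 2) / ln (real n)) = (\<lambda>n. C / log 2 (real n))"
    by (auto simp: log_def fun_eq_iff)
  ultimately have "(\<lambda>n::nat. C / log 2 (real n)) \<longlonglongrightarrow> 0" by simp
  then show ?thesis using tendsto_add[OF _ tendsto_const[of D]] by fastforce
qed

lemma prod_if_UNIV:
  fixes a b :: nat and i :: "'d::finite"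
  shows "(\<Prod>j\<in>(UNIV::'d set). if j = i then a else b) = a * b ^ (card (UNIV::'d set) - 1)"
proof -
  have "(\<Prod>j\<in>(UNIV::'d set). if j = i then a else b) = a * (\<Prod>j\<in>UNIV - {i}. if j = i then a else b)"
    by (subst prod.remove[of _ i]) auto
  also have "(\<Prod>j\<in>UNIV - {i}. if j = i then a else b) = (\<Prod>j\<in>UNIV - {i}. b)"
    by (rule prod.cong) auto
  also have "\<dots> = b ^ (card (UNIV::'d set) - 1)" by (simp add: card_Diff_singleton)
  finally show ?thesis .
qed

lemma card_slab:
  fixes i :: "'d::finite" and S :: "int set"
  assumes "finite S"
  shows "card (PiE (UNIV::'d set) (\<lambda>j. if j = i then S else {1..int n})) = card S * n ^ (card (UNIV::'d set) - 1)"
proof -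
  have "card (PiE (UNIV::'d set) (\<lambda>j. if j = i then S else {1..int n}))
      = (\<Prod>j\<in>(UNIV::'d set). if j = i then card S else n)"
    by (simp add: card_PiE if_distrib cong: if_cong)
  also have "\<dots> = card S * n ^ (card (UNIV::'d set) - 1)" by (rule prod_if_UNIV)
  finally show ?thesis .
qed

lemma card_band:
  fixes K :: int
  assumes K: "K \<ge> 0"
  shows "card {p\<in>(cube n :: ('d::finite \<Rightarrow> int) set). \<exists>i. p i \<le> K \<or> int n - K < p i}
    \<le> 2 * card (UNIV::'d set) * nat K * n ^ (card (UNIV::'d set) - 1)"
proof -
  define Lo where "Lo i = PiE (UNIV::'d set) (\<lambda>j. if j = i then {1..K} else {1..int n})" for i
  define Hi where "Hi i = PiE (UNIV::'d set) (\<lambda>j. if j = i then {int n - K + 1..int n} else {1..int n})" for i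
  have sub: "{p\<in>(cube n :: ('d \<Rightarrow> int) set). \<exists>i. p i \<le> K \<or> int n - K < p i} \<subseteq> (\<Union>i. Lo i \<union> Hi i)"
  proof
    fix p :: "'d \<Rightarrow> int" assume "p \<in> {p\<in>cube n. \<exists>i. p i \<le> K \<or> int n - K < p i}"
    then obtain i where c: "\<And>j. 1 \<le> p j \<and> p j \<le> int n" and i: "p i \<le> K \<or> int n - K < p i"
      by (auto simp: cube_def)
    from i show "p \<in> (\<Union>i. Lo i \<union> Hi i)"
    proof
      assume "p i \<le> K"
      then have "p \<in> Lo i" using c by (auto simp: Lo_def)
      then show ?thesis by blast
    next
      assume "int n - K < p i"
      then have "p \<in> Hi i" using c by (auto simp: Hi_def)
      then show ?thesis by blast
    qed
  qed
  have cL: "card (Lo i) = nat K * n ^ (card (UNIV::'d set) - 1)" for i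
    unfolding Lo_def by (subst card_slab) auto
  have cH: "card (Hi i) = nat K * n ^ (card (UNIV::'d set) - 1)" for i
    unfolding Hi_def by (subst card_slab) auto
  have fin: "finite (Lo i \<union> Hi i)" for i
    unfolding Lo_def Hi_def by (auto intro!: finite_PiE)
  have "card {p\<in>(cube n :: ('d \<Rightarrow> int) set). \<exists>i. p i \<le> K \<or> int n - K < p i} \<le> card (\<Union>i. Lo i \<union> Hi i)"
    by (rule card_mono[OF _ sub]) (use fin in auto)
  also have "\<dots> \<le> (\<Sum>i\<in>UNIV. card (Lo i \<union> Hi i))" by (rule card_UN_le) simp
  also have "\<dots> \<le> (\<Sum>i\<in>(UNIV::'d set). 2 * nat K * n ^ (card (UNIV::'d set) - 1))"
  proof (rule sum_mono)
    fix i show "card (Lo i \<union> Hi i) \<le> 2 * nat K * n ^ (card (UNIV::'d set) - 1)"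
      using card_Un_le[of "Lo i" "Hi i"] cL cH by simp
  qed
  also have "\<dots> = 2 * card (UNIV::'d set) * nat K * n ^ (card (UNIV::'d set) - 1)" by simp
  finally show ?thesis .
qed


lemma log_bound:
  fixes Nn Ak C nd ln2 :: real
  assumes Nn: "Nn \<ge> 2" and le: "log 2 Nn \<le> C * nd" and C: "C \<ge> 1" and nd: "nd \<ge> 1"
    and n: "log 2 n > 0" and ndn: "log 2 nd = e * log 2 n"
  shows "log 2 (log 2 Nn) / log 2 n \<le> log 2 C / log 2 n + e"
proof -
  have L1: "log 2 Nn \<ge> 1" using Nn by simp
  have "log 2 (log 2 Nn) \<le> log 2 (C * nd)" using L1 le C nd by simp
  also have "\<dots> = log 2 C + e * log 2 n" using C nd ndn by (simp add: log_mult)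
  finally have "log 2 (log 2 Nn) \<le> log 2 C + e * log 2 n" .
  then have "log 2 (log 2 Nn) / log 2 n \<le> (log 2 C + e * log 2 n) / log 2 n"
    using n by (simp add: divide_right_mono)
  also have "\<dots> = log 2 C / log 2 n + e" using n by (simp add: add_divide_distrib)
  finally show ?thesis .
qed

theorem mainTheorem3:
  fixes X :: "('d::finite, 'a::finite) config set"
  assumes "is_SFT X" and "minimal_subshift X"
  shows "upper_entropy_dim X \<le> ereal (real (card (UNIV :: 'd set)) - 1)"
proof -
  obtain F where F: "finite F" "\<forall>P\<in>F. is_pattern P" "X = {x. \<forall>P\<in>F. \<not> occurs_in P x}"
    using assms(1) unfolding is_SFT_def by blast
  have "finite (\<Union>P\<in>F. dom P)" using F by (auto simp: is_pattern_def)
  then obtain N where N: "\<forall>p\<in>(\<Union>P\<in>F. dom P). \<forall>i. \<bar>p i\<bar> \<le> int N" using finite_bound by blast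
  define M where "M = int N"
  interpret msft F M X
    by unfold_locales (use F N assms(2) in \<open>auto simp: M_def\<close>)
  define d where "d = card (UNIV :: 'd set)"
  define A where "A = card (UNIV :: 'a set)"
  define K0 where "K0 = 2 * d * nat (2*M)"
  have d1: "d \<ge> 1" unfolding d_def by (simp add: Suc_le_eq finite_UNIV_card_ge_0)
  have A1: "A \<ge> 1" unfolding A_def by (simp add: Suc_le_eq finite_UNIV_card_ge_0)
  have Nc: "N_count X n \<le> A ^ (K0 * n ^ (d - 1))" for n
  proof -
    have "N_count X n \<le> A ^ card {p\<in>(cube n :: ('d \<Rightarrow> int) set). \<exists>i. p i \<le> 2*M \<or> int n - 2*M < p i}"
      using count_bound A_def by simp
    also have "\<dots> \<le> A ^ (K0 * n ^ (d - 1))"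
      using card_band[of "2*M" n] M0 A1 unfolding K0_def d_def
      by (intro power_increasing) (auto simp: mult.assoc)
    finally show ?thesis .
  qed
  define C where "C = max 1 (real K0 * log 2 (real A))"
  have bound: "ent_dim_term X n \<le> ereal (log 2 C / log 2 (real n) + (real d - 1))" if n2: "n \<ge> 2" for n
  proof (cases "N_count X n \<le> 1")
    case True then show ?thesis by (simp add: ent_dim_term_def)
  next
    case False
    define Nn where "Nn = real (N_count X n)"
    have Nn2: "Nn \<ge> 2" using False unfolding Nn_def by simp
    have "Nn \<le> real A ^ (K0 * n ^ (d - 1))" unfolding Nn_def
      using Nc[of n] by (metis of_nat_le_iff of_nat_power)
    then have "log 2 Nn \<le> log 2 (real A ^ (K0 * n ^ (d - 1)))"
      using Nn2 by (intro log_mono) auto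
    also have "\<dots> = real (K0 * n ^ (d - 1)) * log 2 (real A)" using A1 by (simp add: log_nat_power)
    also have "\<dots> = (real K0 * log 2 (real A)) * real n ^ (d - 1)" by simp
    also have "\<dots> \<le> C * real n ^ (d - 1)" unfolding C_def
      by (intro mult_right_mono) auto
    finally have le: "log 2 Nn \<le> C * real n ^ (d - 1)" .
    have "log 2 (log 2 Nn) / log 2 (real n) \<le> log 2 C / log 2 (real n) + real (d - 1)"
      by (rule log_bound[OF Nn2 le]) (use n2 in \<open>auto simp: C_def log_nat_power\<close>)
    then show ?thesis using False d1 unfolding ent_dim_term_def Nn_def by (simp add: of_nat_diff)
  qed
  have "upper_entropy_dim X \<le> limsup (\<lambda>n. ereal (log 2 C / log 2 (real n) + (real d - 1)))"
    unfolding upper_entropy_dim_def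
    by (rule Limsup_mono) (use bound in \<open>auto simp: eventually_sequentially\<close>)
  also have "\<dots> = ereal (real d - 1)"
    by (rule lim_imp_Limsup) (auto intro: tendsto_ereal lim_aux)
  finally show ?thesis unfolding d_def .
qed

end
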